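(* Let $a\ge b\ge2$ and $k$ be integers with $2a+3\le k\le 2a+2b-1$. Then for every $(i,j)\in Q_1$: - $w_1,w_4,w_5\in\mathcal{R}^k_{(a,b),(i,j)}$; - if moreover $b\ge\lceil a/2\rceil+2$ and $2a+3\le k\le a+2b-1$, then also $w_6\in\mathcal{R}^k_{(a,b),(i,j)}$.
   Context: $\widehat{\mathfrak{su}}(3)_k$ fusion. Let $P_+^k=\{(\lambda_1,\lambda_2)\in\mathbb{Z}_{\ge0}^2:\lambda_1+\lambda_2\le k\}$. For $\lambda,\mu,\nu\in P_+^k$ set - $\mathcal{A}=\tfrac13[2(\lambda_1+\mu_1+\nu_2)+\lambda_2+\mu_2+\nu_1]$, - $\mathcal{B}=\tfrac13[\lambda_1+\mu_1+\nu_2+2(\lambda_2+\mu_2+\nu_1)]$, - $k_0^{\max}=\min(\mathcal{A},\mathcal{B})$, - $k_0^{\min}=\max(\lambda_1+\lambda_2,\mu_1+\mu_2,\nu_1+\nu_2,\mathcal{A}-\lambda_1,\mathcal{A}-\mu_1,\mathcal{A}-\nu_2,\mathcal{B}-\lambda_2,\mathcal{B}-\mu_2,\mathcal{B}-\nu_1)$. The fusion multiplicity is $N^{(k)\nu}_{\lambda,\mu}=\min(k_0^{\max},k)-k_0^{\min}+1$ if $\mathcal{A},\mathcal{B}$ are nonnegative integers, $k_0^{\max}\ge k_0^{\min}$ and $k\ge k_0^{\min}$; otherwise it is $0$. The set $\mathcal{R}^k_{\lambda,\mu}$ is $\{\nu\in P_+^k:N^{(k)\nu}_{\lambda,\mu}\ne0\}$.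 The candidate weights are $w_1=(a-1,b+2)$, $w_2=(a+2,b-1)$, $w_3=(a+1,b-2)$, $w_4=(a-2,b+1)$, $w_5=(a+1,b+1)$, $w_6=(a-1,b-1)$. The set $Q_1$ is defined by $Q_1=\{(2k-3p,3p-k):p\in\mathbb{Z},\ \lceil(k+1)/2\rceil\le p\le\min(a+b,k-a-1,\lfloor2k/3\rfloor,\lfloor(b+k)/2\rfloor)\}$. *)

theory Defs
  imports Complex_Main
begin

type_synonym wt = "int \<times> int"

definition Pplus :: "int \<Rightarrow> wt set" where
  "Pplus k = {(l1, l2). 0 \<le> l1 \<and> 0 \<le> l2 \<and> l1 + l2 \<le> k}"

definition calA :: "wt \<Rightarrow> wt \<Rightarrow> wt \<Rightarrow> rat" where
  "calA lam mu nu = (2 * of_int (fst lam + fst mu + snd nu) + of_int (snd lam + snd mu + fst nu)) / 3"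

definition calB :: "wt \<Rightarrow> wt \<Rightarrow> wt \<Rightarrow> rat" where
  "calB lam mu nu = (of_int (fst lam + fst mu + snd nu) + 2 * of_int (snd lam + snd mu + fst nu)) / 3"

definition k0max :: "wt \<Rightarrow> wt \<Rightarrow> wt \<Rightarrow> rat" where
  "k0max lam mu nu = min (calA lam mu nu) (calB lam mu nu)"

definition k0min :: "wt \<Rightarrow> wt \<Rightarrow> wt \<Rightarrow> rat" where
  "k0min lam mu nu = (let A = calA lam mu nu; B = calB lam mu nu in
     Max {of_int (fst lam + snd lam), of_int (fst mu + snd mu), of_int (fst nu + snd nu),
          A - of_int (fst lam), A - of_int (fst mu), A - of_int (snd nu),
          B - of_int (snd lam), B - of_int (snd mu), B - of_int (fst nu)})"

definition fusionN :: "int \<Rightarrow> wt \<Rightarrow> wt \<Rightarrow> wt \<Rightarrow> int" where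
  "fusionN k lam mu nu =
    (if lam \<in> Pplus k \<and> mu \<in> Pplus k \<and> nu \<in> Pplus k
        \<and> calA lam mu nu \<in> \<int> \<and> calB lam mu nu \<in> \<int>
        \<and> calA lam mu nu \<ge> 0 \<and> calB lam mu nu \<ge> 0
        \<and> k0max lam mu nu \<ge> k0min lam mu nu \<and> of_int k \<ge> k0min lam mu nu
     then \<lfloor>min (k0max lam mu nu) (of_int k) - k0min lam mu nu + 1\<rfloor>
     else 0)"

definition fusionR :: "int \<Rightarrow> wt \<Rightarrow> wt \<Rightarrow> wt set" where
  "fusionR k lam mu = {nu \<in> Pplus k. fusionN k lam mu nu \<noteq> 0}"

definition Q1 :: "int \<Rightarrow> int \<Rightarrow> int \<Rightarrow> wt set" where
  "Q1 a b k = {(2*k - 3*p, 3*p - k) | p.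
     \<lceil>of_int (k + 1) / (2::rat)\<rceil> \<le> p \<and>
     p \<le> min (min (a + b) (k - a - 1)) (min \<lfloor>of_int (2*k) / (3::rat)\<rfloor> \<lfloor>of_int (b + k) / (2::rat)\<rfloor>)}"

end

theory Submission
  imports Defs
begin
lemma gen:
  fixes k X Y l1 l2 m1 m2 n1 n2 :: int
  assumes P: "(l1,l2) \<in> Pplus k" "(m1,m2) \<in> Pplus k" "(n1,n2) \<in> Pplus k"
    and AX: "calA (l1,l2) (m1,m2) (n1,n2) = of_int X"
    and BY: "calB (l1,l2) (m1,m2) (n1,n2) = of_int Y"
    and c: "l1+l2 \<le> min (min X Y) k" "m1+m2 \<le> min (min X Y) k" "n1+n2 \<le> min (min X Y) k"
      "X - l1 \<le> min (min X Y) k" "X - m1 \<le> min (min X Y) k" "X - n2 \<le> min (min X Y) k"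
      "Y - l2 \<le> min (min X Y) k" "Y - m2 \<le> min (min X Y) k" "Y - n1 \<le> min (min X Y) k"
    and X0: "X \<ge> 0" and Y0: "Y \<ge> 0"
  shows "(n1,n2) \<in> fusionR k (l1,l2) (m1,m2)"
proof -
  let ?M = "k0min (l1,l2) (m1,m2) (n1,n2)"
  have Mle: "?M \<le> of_int (min (min X Y) k)"
  proof -
    define m where "m = min (min X Y) k"
    have "\<forall>x\<in>{of_int (l1 + l2), of_int (m1 + m2), of_int (n1 + n2),
          of_int X - of_int l1, of_int X - of_int m1, of_int X - of_int n2,
          of_int Y - of_int l2, of_int Y - of_int m2, of_int Y - of_int n1}. x \<le> (of_int m::rat)"
      using c unfolding m_def[symmetric] by simp
    thus ?thesis unfolding k0min_def Let_def AX BY m_def[symmetric] fst_conv snd_conv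
      by (subst Max_le_iff) auto
  qed
  have Mle1: "?M \<le> of_int (min X Y)" "?M \<le> of_int k" using Mle
    by (metis min.cobounded1 min.cobounded2 of_int_le_iff order_trans)+
  have k0: "k0max (l1,l2) (m1,m2) (n1,n2) = of_int (min X Y)"
    unfolding k0max_def AX BY by simp
  have cond: "calA (l1,l2) (m1,m2) (n1,n2) \<in> \<int> \<and> calB (l1,l2) (m1,m2) (n1,n2) \<in> \<int>
        \<and> calA (l1,l2) (m1,m2) (n1,n2) \<ge> 0 \<and> calB (l1,l2) (m1,m2) (n1,n2) \<ge> 0
        \<and> k0max (l1,l2) (m1,m2) (n1,n2) \<ge> ?M \<and> of_int k \<ge> ?M"
    using Mle1 X0 Y0 unfolding AX BY k0 by simp
  have "min (k0max (l1,l2) (m1,m2) (n1,n2)) (of_int k) - ?M + 1 \<ge> 1"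
    using Mle1 unfolding k0 by simp
  hence "\<lfloor>min (k0max (l1,l2) (m1,m2) (n1,n2)) (of_int k) - ?M + 1\<rfloor> \<ge> 1"
    by (metis floor_mono floor_one)
  hence "fusionN k (l1,l2) (m1,m2) (n1,n2) \<noteq> 0" using P cond unfolding fusionN_def
    by (simp only: if_True simp_thms)
  thus ?thesis using P unfolding fusionR_def by blast
qed

lemma ceil_le: "\<lceil>of_int x / (2::rat)\<rceil> \<le> p \<longleftrightarrow> x \<le> 2*p"
proof -
  have "(of_int x / (2::rat) \<le> of_int p) = (of_int x \<le> (of_int (2*p)::rat))" by (simp add: divide_le_eq mult.commute)
  thus ?thesis by (simp only: ceiling_le_iff of_int_le_iff)
qed
lemma le_floor2: "p \<le> \<lfloor>of_int x / (2::rat)\<rfloor> \<longleftrightarrow> 2*p \<le> x"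
proof -
  have "(of_int p \<le> of_int x / (2::rat)) = ((of_int (2*p)::rat) \<le> of_int x)" by (simp add: le_divide_eq mult.commute)
  thus ?thesis by (simp only: le_floor_iff of_int_le_iff)
qed
lemma le_floor3: "p \<le> \<lfloor>of_int x / (3::rat)\<rfloor> \<longleftrightarrow> 3*p \<le> x"
proof -
  have "(of_int p \<le> of_int x / (3::rat)) = ((of_int (3*p)::rat) \<le> of_int x)" by (simp add: le_divide_eq mult.commute)
  thus ?thesis by (simp only: le_floor_iff of_int_le_iff)
qed

theorem mainTheorem7:
  fixes a b k :: int
  assumes "a \<ge> b" and "b \<ge> 2"
    and "2*a + 3 \<le> k" and "k \<le> 2*a + 2*b - 1"
  shows "\<forall>(i, j) \<in> Q1 a b k.
           (a - 1, b + 2) \<in> fusionR k (a, b) (i, j) \<and>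
           (a - 2, b + 1) \<in> fusionR k (a, b) (i, j) \<and>
           (a + 1, b + 1) \<in> fusionR k (a, b) (i, j) \<and>
           (b \<ge> \<lceil>of_int a / (2::rat)\<rceil> + 2 \<and> 2*a + 3 \<le> k \<and> k \<le> a + 2*b - 1
              \<longrightarrow> (a - 1, b - 1) \<in> fusionR k (a, b) (i, j))"
proof (intro ballI, clarify)
  fix i j assume "(i, j) \<in> Q1 a b k"
  then obtain p where ij: "i = 2*k - 3*p" "j = 3*p - k"
    and p1: "k + 1 \<le> 2*p" and p2: "p \<le> a + b" "p \<le> k - a - 1" "3*p \<le> 2*k" "2*p \<le> b + k"
  proof -
    from \<open>(i, j) \<in> Q1 a b k\<close> obtain p where "(i,j) = (2*k - 3*p, 3*p - k)" "\<lceil>of_int (k + 1) / (2::rat)\<rceil> \<le> p"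
      "p \<le> min (min (a + b) (k - a - 1)) (min \<lfloor>of_int (2*k) / (3::rat)\<rfloor> \<lfloor>of_int (b + k) / (2::rat)\<rfloor>)"
      unfolding Q1_def by blast
    thus ?thesis using that by (simp only: min.bounded_iff ceil_le le_floor2 le_floor3 prod.inject)
  qed
  have w1: "(a - 1, b + 2) \<in> fusionR k (a, b) (i, j)" unfolding ij
    apply (rule gen[where X="a+b+k-p+1" and Y="a+b+p"])
    using assms p1 p2 by (auto simp: Pplus_def calA_def calB_def field_simps)
  have w4: "(a - 2, b + 1) \<in> fusionR k (a, b) (i, j)" unfolding ij
    apply (rule gen[where X="a+b+k-p" and Y="a+b+p-1"])
    using assms p1 p2 by (auto simp: Pplus_def calA_def calB_def field_simps)
  have w5: "(a + 1, b + 1) \<in> fusionR k (a, b) (i, j)" unfolding ij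
    apply (rule gen[where X="a+b+k-p+1" and Y="a+b+p+1"])
    using assms p1 p2 by (auto simp: Pplus_def calA_def calB_def field_simps)
  have w6: "(a - 1, b - 1) \<in> fusionR k (a, b) (i, j)"
    if "b \<ge> \<lceil>of_int a / (2::rat)\<rceil> + 2" "k \<le> a + 2*b - 1"
  proof -
    have ab: "a \<le> 2*b - 4" using that(1) ceil_le[of a "b-2"] by simp
    show ?thesis unfolding ij
      apply (rule gen[where X="a+b+k-p-1" and Y="a+b+p-1"])
      using assms p1 p2 ab that(2) by (auto simp: Pplus_def calA_def calB_def field_simps)
  qed
  show "(a - 1, b + 2) \<in> fusionR k (a, b) (i, j) \<and>
           (a - 2, b + 1) \<in> fusionR k (a, b) (i, j) \<and>
           (a + 1, b + 1) \<in> fusionR k (a, b) (i, j) \<and>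
           (b \<ge> \<lceil>of_int a / (2::rat)\<rceil> + 2 \<and> 2*a + 3 \<le> k \<and> k \<le> a + 2*b - 1
              \<longrightarrow> (a - 1, b - 1) \<in> fusionR k (a, b) (i, j))"
    using w1 w4 w5 w6 by blast
qed

end
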